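(* Let $f:\mathbb{R}^d\to\mathbb{R}$ and $P:\mathbb{R}^d\to\mathbb{R}^s$ be continuously differentiable, $D\subseteq\mathbb{R}^s$ closed, $\Omega=\{z\mid P(z)\in D\}$, $\bar z\in\Omega$, and assume that GGCQ holds at $\bar z$. Then $\bar z$ is a sharp minimum of the problem $\min f(z)$ s.t. $P(z)\in D$ if and only if there is some $\alpha'>0$ such that \[\langle\nabla f(\bar z),u\rangle\ge\alpha'\|u\|\quad\forall u\in T^{\rm lin}_{P,D}(\bar z).\]
   Context: Tangent cone $T_\Omega(\bar z)=\{w\mid \exists t_k\downarrow0,\ w_k\to w,\ \bar z+t_kw_k\in\Omega\}$; polar cone $K^\ast=\{z^\ast\mid\langle z^\ast,w\rangle\le0\ \forall w\in K\}$; regular normal cone $\widehat N_\Omega(\bar z)=(T_\Omega(\bar z))^\ast$. Linearized tangent cone $T^{\rm lin}_{P,D}(\bar z)=\{u\mid\nabla P(\bar z)u\in T_D(P(\bar z))\}$. GGCQ holds at $\bar z$ if $\widehat N_\Omega(\bar z)=(T^{\rm lin}_{P,D}(\bar z))^\ast$. A point $\bar z\in\Omega$ is a sharp minimum if there is $\alpha>0$ such that $f(z)\ge f(\bar z)+\alpha\|z-\bar z\|$ for all $z\in\Omega$ close to $\bar z$. *)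

theory Defs
  imports "HOL-Analysis.Analysis"
begin

definition tangent_cone :: "'a::real_normed_vector set \<Rightarrow> 'a \<Rightarrow> 'a set" where
  "tangent_cone Omega zb = {w. \<exists>t wk. (\<forall>k. t k > (0::real)) \<and> t \<longlonglongrightarrow> 0 \<and>
      wk \<longlonglongrightarrow> w \<and> (\<forall>k. zb + t k *\<^sub>R wk k \<in> Omega)}"

definition polar_cone :: "'a::real_inner set \<Rightarrow> 'a set" where
  "polar_cone K = {zs. \<forall>w\<in>K. zs \<bullet> w \<le> 0}"

definition regular_normal_cone :: "'a::real_inner set \<Rightarrow> 'a \<Rightarrow> 'a set" where
  "regular_normal_cone Omega zb = polar_cone (tangent_cone Omega zb)"

text \<open>Linearized tangent cone; DPz is the derivative (Jacobian) of P at zb.\<close>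
definition lin_tangent_cone :: "('a::real_normed_vector \<Rightarrow> 'b::real_normed_vector) \<Rightarrow> 'b set \<Rightarrow> 'a \<Rightarrow> ('a \<Rightarrow> 'b) \<Rightarrow> 'a set" where
  "lin_tangent_cone P D zb DPz = {u. DPz u \<in> tangent_cone D (P zb)}"

definition GGCQ :: "('a::real_inner \<Rightarrow> 'b::real_normed_vector) \<Rightarrow> 'b set \<Rightarrow> 'a \<Rightarrow> ('a \<Rightarrow> 'b) \<Rightarrow> bool" where
  "GGCQ P D zb DPz \<longleftrightarrow>
     regular_normal_cone {z. P z \<in> D} zb = polar_cone (lin_tangent_cone P D zb DPz)"

definition sharp_min :: "('a::real_normed_vector \<Rightarrow> real) \<Rightarrow> 'a set \<Rightarrow> 'a \<Rightarrow> bool" where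
  "sharp_min f Omega zb \<longleftrightarrow> zb \<in> Omega \<and> (\<exists>\<alpha>>0. \<exists>\<delta>>0. \<forall>z\<in>Omega.
      norm (z - zb) < \<delta> \<longrightarrow> f z \<ge> f zb + \<alpha> * norm (z - zb))"

end

theory Submission
  imports Defs
begin

lemma cond_polar:
  fixes g :: "'a::real_inner" and K :: "'a set"
  assumes "\<alpha> \<ge> 0"
  shows "(\<forall>w\<in>K. g \<bullet> w \<ge> \<alpha> * norm w) \<longleftrightarrow>
         (\<forall>b. norm b \<le> 1 \<longrightarrow> \<alpha> *\<^sub>R b - g \<in> polar_cone K)"
proof
  assume H: "\<forall>w\<in>K. g \<bullet> w \<ge> \<alpha> * norm w"
  show "\<forall>b. norm b \<le> 1 \<longrightarrow> \<alpha> *\<^sub>R b - g \<in> polar_cone K"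
  proof (intro allI impI)
    fix b :: 'a assume b: "norm b \<le> 1"
    show "\<alpha> *\<^sub>R b - g \<in> polar_cone K" unfolding polar_cone_def
    proof (intro CollectI ballI)
      fix w assume w: "w \<in> K"
      have "b \<bullet> w \<le> norm b * norm w" by (rule norm_cauchy_schwarz)
      also have "\<dots> \<le> norm w" using b by (simp add: mult_left_le_one_le)
      finally have "\<alpha> * (b \<bullet> w) \<le> \<alpha> * norm w" using assms by (simp add: mult_left_mono)
      then show "(\<alpha> *\<^sub>R b - g) \<bullet> w \<le> 0" using H w by (force simp add: inner_diff_left)
    qed
  qed
next
  assume H: "\<forall>b. norm b \<le> 1 \<longrightarrow> \<alpha> *\<^sub>R b - g \<in> polar_cone K"
  show "\<forall>w\<in>K. g \<bullet> w \<ge> \<alpha> * norm w"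
  proof
    fix w assume w: "w \<in> K"
    show "g \<bullet> w \<ge> \<alpha> * norm w"
    proof (cases "w = 0")
      case True then show ?thesis by simp
    next
      case False
      let ?b = "(1 / norm w) *\<^sub>R w"
      have "norm ?b \<le> 1" using False by simp
      then have "(\<alpha> *\<^sub>R ?b - g) \<bullet> w \<le> 0" using H w unfolding polar_cone_def by blast
      moreover have "?b \<bullet> w = norm w" using False by (simp add: power2_norm_eq_inner[symmetric] power2_eq_square)
      then have "(\<alpha> *\<^sub>R ?b) \<bullet> w = \<alpha> * norm w" by (simp only: inner_scaleR_left)
      ultimately show ?thesis by (simp add: inner_diff_left)
    qed
  qed
qed

lemma sharp_iff_T:
  fixes f :: "'a::euclidean_space \<Rightarrow> real"
  assumes der: "(f has_derivative (\<lambda>h. g \<bullet> h)) (at zb)" and zb: "zb \<in> \<Omega>"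
  shows "sharp_min f \<Omega> zb \<longleftrightarrow> (\<exists>\<alpha>>0. \<forall>w\<in>tangent_cone \<Omega> zb. g \<bullet> w \<ge> \<alpha> * norm w)"
proof -
  have key: "\<And>e. e > 0 \<Longrightarrow> \<exists>d>0. \<forall>y. norm (y - zb) < d \<longrightarrow> norm (f y - f zb - g \<bullet> (y - zb)) \<le> e * norm (y - zb)"
    using der unfolding has_derivative_at_alt by blast
  show ?thesis
  proof
    assume "sharp_min f \<Omega> zb"
    then obtain \<alpha> \<delta> where a: "\<alpha> > 0" and dl: "\<delta> > 0" and
      H: "\<And>z. z \<in> \<Omega> \<Longrightarrow> norm (z - zb) < \<delta> \<Longrightarrow> f z \<ge> f zb + \<alpha> * norm (z - zb)"
      unfolding sharp_min_def by blast
    have "\<forall>w\<in>tangent_cone \<Omega> zb. g \<bullet> w \<ge> \<alpha> * norm w"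
    proof
      fix w assume "w \<in> tangent_cone \<Omega> zb"
      then obtain t wk where tp: "\<And>k. t k > (0::real)" and t0: "t \<longlonglongrightarrow> 0" and wk: "wk \<longlonglongrightarrow> w"
        and inO: "\<And>k. zb + t k *\<^sub>R wk k \<in> \<Omega>" unfolding tangent_cone_def by blast
      show "g \<bullet> w \<ge> \<alpha> * norm w"
      proof (rule ccontr)
        assume "\<not> ?thesis"
        then have gap: "\<alpha> * norm w - g \<bullet> w > 0" by simp
        define \<epsilon> where "\<epsilon> = (\<alpha> * norm w - g \<bullet> w) / (2 * (norm w + 1))"
        have ep: "\<epsilon> > 0" unfolding \<epsilon>_def using gap by (intro divide_pos_pos) (auto, smt (verit) norm_ge_zero)
        have epw: "\<epsilon> * norm w < \<alpha> * norm w - g \<bullet> w"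
        proof -
          have "norm w / (2 * (norm w + 1)) < 1"
            by (subst divide_less_eq) (auto, smt (verit) norm_ge_zero)
          then have "(\<alpha> * norm w - g \<bullet> w) * (norm w / (2 * (norm w + 1))) < (\<alpha> * norm w - g \<bullet> w) * 1"
            using gap by (intro mult_strict_left_mono) auto
          then show ?thesis unfolding \<epsilon>_def by (simp add: field_simps)
        qed
        obtain d where d: "d > 0" and dH: "\<And>y. norm (y - zb) < d \<Longrightarrow> norm (f y - f zb - g \<bullet> (y - zb)) \<le> \<epsilon> * norm (y - zb)"
          using key[OF ep] by blast
        have h0: "(\<lambda>k. t k *\<^sub>R wk k) \<longlonglongrightarrow> 0"
          using tendsto_scaleR[OF t0 wk] by simp
        then have ev: "eventually (\<lambda>k. norm (t k *\<^sub>R wk k) < min d \<delta>) sequentially"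
          using d dl by (intro order_tendstoD(2)[OF tendsto_norm_zero[OF h0]]) simp
        have ev2: "eventually (\<lambda>k. 0 \<le> g \<bullet> wk k + \<epsilon> * norm (wk k) - \<alpha> * norm (wk k)) sequentially"
          using ev
        proof eventually_elim
          case (elim k)
          let ?y = "zb + t k *\<^sub>R wk k"
          have n: "norm (?y - zb) = t k * norm (wk k)" using tp[of k] by simp
          have lt: "norm (?y - zb) < \<delta>" using elim by simp
          have "f ?y \<ge> f zb + \<alpha> * norm (?y - zb)" by (rule H[OF inO[of k] lt])
          then have "f ?y \<ge> f zb + \<alpha> * (t k * norm (wk k))" by (simp only: n)
          moreover have "f ?y - f zb - g \<bullet> (?y - zb) \<le> \<epsilon> * (t k * norm (wk k))"
            proof -
            have "norm (?y - zb) < d" using elim by simp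
            then have "norm (f ?y - f zb - g \<bullet> (?y - zb)) \<le> \<epsilon> * norm (?y - zb)" by (rule dH)
            then show ?thesis unfolding n real_norm_def abs_le_iff by linarith
          qed
          ultimately have "\<alpha> * (t k * norm (wk k)) \<le> t k * (g \<bullet> wk k) + \<epsilon> * (t k * norm (wk k))"
            by (simp add: inner_scaleR_right)
          then have "t k * (\<alpha> * norm (wk k)) \<le> t k * (g \<bullet> wk k + \<epsilon> * norm (wk k))"
            by (simp add: algebra_simps)
          then have "\<alpha> * norm (wk k) \<le> g \<bullet> wk k + \<epsilon> * norm (wk k)"
            using tp[of k] by (simp add: mult_le_cancel_left_pos)
          then show ?case by simp
        qed
        have lim: "(\<lambda>k. g \<bullet> wk k + \<epsilon> * norm (wk k) - \<alpha> * norm (wk k)) \<longlonglongrightarrow> g \<bullet> w + \<epsilon> * norm w - \<alpha> * norm w"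
          by (intro tendsto_intros wk)
        have "0 \<le> g \<bullet> w + \<epsilon> * norm w - \<alpha> * norm w"
          by (rule tendsto_lowerbound[OF lim ev2]) simp
        with epw show False by simp
      qed
    qed
    with a show "\<exists>\<alpha>>0. \<forall>w\<in>tangent_cone \<Omega> zb. g \<bullet> w \<ge> \<alpha> * norm w" by blast
  next
    assume "\<exists>\<alpha>>0. \<forall>w\<in>tangent_cone \<Omega> zb. g \<bullet> w \<ge> \<alpha> * norm w"
    then obtain \<alpha> where a: "\<alpha> > 0" and HT: "\<And>w. w \<in> tangent_cone \<Omega> zb \<Longrightarrow> g \<bullet> w \<ge> \<alpha> * norm w" by blast
    have "\<exists>\<delta>>0. \<forall>z\<in>\<Omega>. norm (z - zb) < \<delta> \<longrightarrow> f z \<ge> f zb + (\<alpha>/2) * norm (z - zb)"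
    proof (rule ccontr)
      assume "\<not> ?thesis"
      then have "\<forall>n. \<exists>z. z \<in> \<Omega> \<and> norm (z - zb) < inverse (real (Suc n)) \<and> f z < f zb + (\<alpha>/2) * norm (z - zb)"
        by (metis inverse_positive_iff_positive of_nat_0_less_iff zero_less_Suc not_le)
      then obtain z where zO: "\<And>n. z n \<in> \<Omega>" and zn: "\<And>n. norm (z n - zb) < inverse (real (Suc n))"
        and zf: "\<And>n. f (z n) < f zb + (\<alpha>/2) * norm (z n - zb)" by metis
      define t where "t n = norm (z n - zb)" for n
      have tp: "t n > 0" for n
      proof -
        have "z n \<noteq> zb" using zf[of n] by auto
        then show ?thesis unfolding t_def by simp
      qed
      have t0: "t \<longlonglongrightarrow> 0"
        by (rule tendsto_sandwich[OF _ _ tendsto_const LIMSEQ_inverse_real_of_nat])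
           (auto intro!: always_eventually less_imp_le[OF zn] simp: t_def simp del: of_nat_Suc)
      define u where "u n = (1 / t n) *\<^sub>R (z n - zb)" for n
      have zu: "z n = zb + t n *\<^sub>R u n" for n using tp[of n] unfolding u_def by simp
      have us: "u n \<in> sphere 0 1" for n using tp[of n] unfolding u_def t_def by simp
      obtain w r where ws: "w \<in> sphere 0 1" and r: "strict_mono r" and ur: "(u \<circ> r) \<longlonglongrightarrow> w"
        using compact_sphere[of "0::'a" 1] us unfolding compact_def by meson
      have "w \<in> tangent_cone \<Omega> zb" unfolding tangent_cone_def
        apply (rule CollectI, rule exI[of _ "t \<circ> r"], rule exI[of _ "u \<circ> r"])
        using tp LIMSEQ_subseq_LIMSEQ[OF t0 r] ur zO zu by auto
      then have gw: "g \<bullet> w \<ge> \<alpha>" using HT ws by fastforce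
      obtain d where d: "d > 0" and dH: "\<And>y. norm (y - zb) < d \<Longrightarrow> norm (f y - f zb - g \<bullet> (y - zb)) \<le> (\<alpha>/4) * norm (y - zb)"
        using key[of "\<alpha>/4"] a by auto
      have ev: "eventually (\<lambda>n. t n < d) sequentially" using order_tendstoD(2)[OF t0 d] .
      have ev1: "eventually (\<lambda>n. g \<bullet> u n \<le> 3 * \<alpha> / 4) sequentially"
        using ev
      proof eventually_elim
        case (elim n)
        have "norm (f (z n) - f zb - g \<bullet> (z n - zb)) \<le> (\<alpha>/4) * t n" using dH[of "z n"] elim unfolding t_def by simp
        then have "g \<bullet> (z n - zb) - (\<alpha>/4) * t n \<le> f (z n) - f zb" unfolding real_norm_def abs_le_iff by linarith
        moreover have "f (z n) - f zb < (\<alpha>/2) * t n" using zf[of n] unfolding t_def by simp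
        moreover have "g \<bullet> (z n - zb) = t n * (g \<bullet> u n)" using zu[of n] by (simp add: inner_scaleR_right)
        ultimately have "t n * (g \<bullet> u n) \<le> (\<alpha>/2) * t n + (\<alpha>/4) * t n" by linarith
        moreover have "t n * (3 * \<alpha> / 4) = (\<alpha>/2) * t n + (\<alpha>/4) * t n" by (simp add: field_simps)
        ultimately have "t n * (g \<bullet> u n) \<le> t n * (3 * \<alpha> / 4)" by linarith
        then show ?case using tp[of n] by (simp add: mult_le_cancel_left_pos)
      qed
      have ev2: "eventually (\<lambda>n. g \<bullet> (u \<circ> r) n \<le> 3 * \<alpha> / 4) sequentially"
        using eventually_subseq[OF r ev1] by (simp add: comp_def)
      have lim: "(\<lambda>n. g \<bullet> (u \<circ> r) n) \<longlonglongrightarrow> g \<bullet> w" by (intro tendsto_intros ur)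
      have "g \<bullet> w \<le> 3 * \<alpha> / 4" by (rule tendsto_upperbound[OF lim ev2]) simp
      with gw a show False by simp
    qed
    moreover have "\<alpha>/2 > 0" using a by simp
    ultimately show "sharp_min f \<Omega> zb" unfolding sharp_min_def using zb by blast
  qed
qed

theorem lemma4p4:
  fixes f :: "'a::euclidean_space \<Rightarrow> real" and gradf :: "'a \<Rightarrow> 'a"
    and P :: "'a \<Rightarrow> 'b::euclidean_space" and DP :: "'a \<Rightarrow> ('a \<Rightarrow>\<^sub>L 'b)"
    and D :: "'b set" and zb :: 'a
  assumes f_C1: "\<And>z. (f has_derivative (\<lambda>h. gradf z \<bullet> h)) (at z)" "continuous_on UNIV gradf"
    and P_C1: "\<And>z. (P has_derivative blinfun_apply (DP z)) (at z)" "continuous_on UNIV DP"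
    and D_closed: "closed D"
    and zb_feas: "P zb \<in> D"
    and ggcq: "GGCQ P D zb (blinfun_apply (DP zb))"
  shows "sharp_min f {z. P z \<in> D} zb \<longleftrightarrow>
    (\<exists>\<alpha>'>0. \<forall>u \<in> lin_tangent_cone P D zb (blinfun_apply (DP zb)). gradf zb \<bullet> u \<ge> \<alpha>' * norm u)"
proof -
  let ?T = "tangent_cone {z. P z \<in> D} zb"
  let ?L = "lin_tangent_cone P D zb (blinfun_apply (DP zb))"
  have pe: "polar_cone ?T = polar_cone ?L"
    using ggcq unfolding GGCQ_def regular_normal_cone_def .
  have eq: "(\<forall>w\<in>?T. gradf zb \<bullet> w \<ge> \<alpha> * norm w) \<longleftrightarrow> (\<forall>w\<in>?L. gradf zb \<bullet> w \<ge> \<alpha> * norm w)"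
    if "\<alpha> > 0" for \<alpha>
    using cond_polar[of \<alpha> ?T "gradf zb"] cond_polar[of \<alpha> ?L "gradf zb"] that pe by simp
  have "sharp_min f {z. P z \<in> D} zb \<longleftrightarrow> (\<exists>\<alpha>>0. \<forall>w\<in>?T. gradf zb \<bullet> w \<ge> \<alpha> * norm w)"
    using sharp_iff_T[OF f_C1(1)[of zb]] zb_feas by simp
  also have "\<dots> \<longleftrightarrow> (\<exists>\<alpha>>0. \<forall>w\<in>?L. gradf zb \<bullet> w \<ge> \<alpha> * norm w)"
    using eq by blast
  finally show ?thesis .
qed

end
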